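(* Each of the following systems has an isochronous center at the origin $O$ with zero Urabe function: (i) for every $a\in\mathbb R$: $\dot x=-y+axy+x^2-ax^3$, $\dot y=x+4ay^2-2xy-\frac32ax^2-6ax^2y+(2+a^2)x^3+\left(2a-\frac14a^3\right)x^4$; (ii) for every $a\in\mathbb R$: $\dot x=-y+axy+x^2-ax^3$, $\dot y=x+3ay^2-2xy-ax^2-4ax^2y+\left(\frac13a^2+2\right)x^3+ax^4$; (iii) for $\beta=\pm\sqrt3$: $\dot x=-y+2\beta xy+x^2-2\beta x^3$, $\dot y=x+8\beta y^2-2xy-3\beta x^2-12\beta x^2y+14x^3-2\beta x^4$; (iv) for $\alpha=\pm\sqrt2$: $\dot x=-y+\alpha xy+x^2-\frac43\alpha x^3+\frac23x^4$, $\dot y=x+6\alpha y^2-2xy-\frac52\alpha x^2-9\alpha x^2y+\frac{26}{3}x^3+6x^3y-\frac83\alpha x^4$; (v) for $\alpha=\pm\sqrt2$: $\dot x=-y+\alpha xy+x^2-\frac43\alpha x^3+\frac23x^4$, $\dot y=x+3\alpha y^2-2xy-\alpha x^2-3\alpha x^2y+\frac83x^3+2x^3y-\frac23\alpha x^4$.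
   Context: For a real planar polynomial system $\dot x=-y+A(x,y)$, $\dot y=x+B(x,y)$, with $A,B$ polynomials having no terms of degree $<2$, the origin $O$ is an isochronous center if there is a punctured neighborhood of $O$ in which every orbit is a closed orbit surrounding $O$ and all these orbits have the same period. Zero Urabe function: write the system as $\dot x=p_0(x)+p_1(x)y$, $\dot y=q_0(x)+q_1(x)y+q_2(x)y^2$ ($p_0(0)=q_0(0)=0$, $p_1(0)\ne0$), where it holds that $-\frac{p_1'p_0}{p_1}+q_1+p_0'-\frac{2q_2p_0}{p_1}\equiv0$. Put $f=-\frac{q_2+p_1'}{p_1}$, $g=-\frac{q_2p_0^2}{p_1}+q_1p_0-p_1q_0$ (the change $z=p_0+p_1y$ gives $\dot x=z$, $\dot z=-g(x)-f(x)z^2$), $F(x)=\int_0^xf$, and $\xi$ near $0$ by $\frac12\xi(x)^2=\int_0^xg(s)e^{2F(s)}ds$, $x\xi(x)>0$ for $x\ne0$. The Urabe function of an isochronous center is the odd analytic $h$ with $\frac{\xi(x)}{1+h(\xi(x))}=g(x)e^{F(x)}$; "zero Urabe function" means $h\equiv0$, i.e. $\xi(x)=g(x)e^{F(x)}$ near $0$. *)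

theory Defs
  imports "HOL-Analysis.Analysis"
begin

definition surrounds_origin :: "(real \<times> real) set \<Rightarrow> bool" where
  "surrounds_origin S \<longleftrightarrow> (0,0) \<notin> S \<and> bounded (connected_component_set (- S) (0,0))"

definition isochronous_center :: "(real \<times> real \<Rightarrow> real \<times> real) \<Rightarrow> bool" where
  "isochronous_center V \<longleftrightarrow>
    (\<exists>U T. open U \<and> (0,0) \<in> U \<and> T > 0 \<and>
      (\<forall>p \<in> U - {(0,0)}. \<exists>x :: real \<Rightarrow> real \<times> real.
          (\<forall>t. (x has_vector_derivative V (x t)) (at t)) \<and> x 0 = p \<and>
          (\<forall>t. x (t + T) = x t) \<and> (\<forall>s. 0 < s \<and> s < T \<longrightarrow> x s \<noteq> p) \<and>
          surrounds_origin (range x)))"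

definition sint :: "real \<Rightarrow> real \<Rightarrow> (real \<Rightarrow> real) \<Rightarrow> real" where
  "sint a b f = (if a \<le> b then integral {a..b} f else - integral {b..a} f)"

text \<open>Zero Urabe function: the system is written as
  x' = p0(x) + p1(x) y, y' = q0(x) + q1(x) y + q2(x) y^2 with p0(0) = q0(0) = 0, p1(0) \<noteq> 0
  and the reducibility identity; and near 0 the function xi defined by
  xi^2/2 = \<int>_0^x g e^{2F}, x xi(x) > 0, coincides with g e^F.\<close>
definition zero_urabe :: "(real \<times> real \<Rightarrow> real \<times> real) \<Rightarrow> bool" where
  "zero_urabe V \<longleftrightarrow>
    (\<exists>p0 p1 q0 q1 q2 :: real \<Rightarrow> real. \<exists>\<delta>>0.
       (\<forall>x y. V (x, y) = (p0 x + p1 x * y, q0 x + q1 x * y + q2 x * y ^ 2)) \<and>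
       p0 0 = 0 \<and> q0 0 = 0 \<and> p1 0 \<noteq> 0 \<and>
       (\<forall>x. \<bar>x\<bar> < \<delta> \<longrightarrow>
          - (deriv p1 x * p0 x / p1 x) + q1 x + deriv p0 x - 2 * q2 x * p0 x / p1 x = 0) \<and>
       (let f = (\<lambda>x. - (q2 x + deriv p1 x) / p1 x);
            g = (\<lambda>x. - (q2 x * p0 x ^ 2 / p1 x) + q1 x * p0 x - p1 x * q0 x);
            F = (\<lambda>x. sint 0 x f)
        in \<forall>x. \<bar>x\<bar> < \<delta> \<longrightarrow>
             (g x * exp (F x)) ^ 2 / 2 = sint 0 x (\<lambda>s. g s * exp (2 * F s)) \<and>
             (x \<noteq> 0 \<longrightarrow> x * (g x * exp (F x)) > 0)))"

definition iso_zero_urabe :: "(real \<times> real \<Rightarrow> real \<times> real) \<Rightarrow> bool" where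
  "iso_zero_urabe V \<longleftrightarrow> isochronous_center V \<and> zero_urabe V"

end

theory Submission
  imports Defs
begin

lemma sint_ftc:
  fixes h h' :: "real \<Rightarrow> real"
  assumes d: "\<And>s. \<bar>s\<bar> < \<delta> \<Longrightarrow> (h has_real_derivative h' s) (at s)" and x: "\<bar>x\<bar> < \<delta>"
  shows "sint 0 x h' = h x - h 0"
proof (cases "0 \<le> x")
  case True
  have "(h' has_integral (h x - h 0)) {0..x}"
    by (rule fundamental_theorem_of_calculus[OF True])
       (use x in \<open>auto intro!: has_field_derivative_at_within d simp: has_real_derivative_iff_has_vector_derivative[symmetric]\<close>)
  then show ?thesis using True by (simp add: sint_def integral_unique)
next
  case False
  have "(h' has_integral (h 0 - h x)) {x..0}"
    by (rule fundamental_theorem_of_calculus) 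
       (use x False in \<open>auto intro!: has_field_derivative_at_within d simp: has_real_derivative_iff_has_vector_derivative[symmetric]\<close>)
  then show ?thesis using False by (simp add: sint_def integral_unique)
qed

lemma gen_zero_urabe:
  fixes V :: "real \<times> real \<Rightarrow> real \<times> real"
    and p0 p1 q0 q1 q2 p0' p1' E \<xi> :: "real \<Rightarrow> real" and \<delta> :: real
  assumes dpos: "\<delta> > 0"
  and V: "\<And>x y. V (x,y) = (p0 x + p1 x * y, q0 x + q1 x * y + q2 x * y^2)"
  and p00: "p0 0 = 0" and q00: "q0 0 = 0"
  and p1nz: "\<And>x. \<bar>x\<bar> < \<delta> \<Longrightarrow> p1 x \<noteq> 0"
  and dp0: "\<And>x. \<bar>x\<bar> < \<delta> \<Longrightarrow> (p0 has_real_derivative p0' x) (at x)"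
  and dp1: "\<And>x. \<bar>x\<bar> < \<delta> \<Longrightarrow> (p1 has_real_derivative p1' x) (at x)"
  and red: "\<And>x. \<bar>x\<bar> < \<delta> \<Longrightarrow> - (p1' x * p0 x / p1 x) + q1 x + p0' x - 2 * q2 x * p0 x / p1 x = 0"
  and Epos: "\<And>x. \<bar>x\<bar> < \<delta> \<Longrightarrow> E x > 0" and E0: "E 0 = 1"
  and dE: "\<And>x. \<bar>x\<bar> < \<delta> \<Longrightarrow> (E has_real_derivative (- (q2 x + p1' x) / p1 x * E x)) (at x)"
  and dxi: "\<And>x. \<bar>x\<bar> < \<delta> \<Longrightarrow> (\<xi> has_real_derivative E x) (at x)"
  and xi0: "\<xi> 0 = 0"
  and gxi: "\<And>x. \<bar>x\<bar> < \<delta> \<Longrightarrow> (- (q2 x * p0 x ^ 2 / p1 x) + q1 x * p0 x - p1 x * q0 x) * E x = \<xi> x"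
  shows "zero_urabe V"
proof -
  define f where "f = (\<lambda>x. - (q2 x + deriv p1 x) / p1 x)"
  define g where "g = (\<lambda>x. - (q2 x * p0 x ^ 2 / p1 x) + q1 x * p0 x - p1 x * q0 x)"
  define F where "F = (\<lambda>x. sint 0 x f)"
  have dd1: "deriv p1 x = p1' x" if "\<bar>x\<bar> < \<delta>" for x using dp1[OF that] by (rule DERIV_imp_deriv)
  have dd0: "deriv p0 x = p0' x" if "\<bar>x\<bar> < \<delta>" for x using dp0[OF that] by (rule DERIV_imp_deriv)
  have dlnE: "((\<lambda>x. ln (E x)) has_real_derivative f s) (at s)" if s: "\<bar>s\<bar> < \<delta>" for s
  proof -
    have "((\<lambda>x. ln (E x)) has_real_derivative (1 / E s) * (- (q2 s + p1' s) / p1 s * E s)) (at s)"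
      using DERIV_chain2[OF DERIV_ln_divide[OF Epos[OF s]] dE[OF s]] .
    moreover have "(1 / E s) * (- (q2 s + p1' s) / p1 s * E s) = f s"
      using Epos[OF s] dd1[OF s] by (simp add: f_def)
    ultimately show ?thesis by simp
  qed
  have FE: "F x = ln (E x)" if x: "\<bar>x\<bar> < \<delta>" for x
    using sint_ftc[of \<delta> "\<lambda>x. ln (E x)" f x, OF dlnE x] E0 by (simp add: F_def)
  have eF: "exp (F x) = E x" if x: "\<bar>x\<bar> < \<delta>" for x using FE[OF x] Epos[OF x] by simp
  have gE: "g x * exp (F x) = \<xi> x" if x: "\<bar>x\<bar> < \<delta>" for x using gxi[OF x] eF[OF x] by (simp add: g_def)
  have dsq: "((\<lambda>x. \<xi> x ^ 2 / 2) has_real_derivative g s * exp (2 * F s)) (at s)" if s: "\<bar>s\<bar> < \<delta>" for s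
  proof -
    have "((\<lambda>x. \<xi> x ^ 2 / 2) has_real_derivative (2 * \<xi> s * E s) / 2) (at s)"
      by (auto intro!: derivative_eq_intros dxi[OF s])
    moreover have "g s * exp (2 * F s) = \<xi> s * E s"
    proof -
      have "exp (2 * F s) = exp (F s) * exp (F s)" by (metis exp_add mult_2)
      then have "g s * exp (2 * F s) = (g s * exp (F s)) * exp (F s)" by (simp only: mult.assoc)
      also have "\<dots> = \<xi> s * E s" using gE[OF s] eF[OF s] by simp
      finally show ?thesis .
    qed
    ultimately show ?thesis by simp
  qed
  have inc: "\<xi> a < \<xi> b" if "-\<delta> < a" "a < b" "b < \<delta>" for a b
  proof (rule DERIV_pos_imp_increasing[OF \<open>a < b\<close>])
    fix x assume "a \<le> x" "x \<le> b"
    then have "\<bar>x\<bar> < \<delta>" using that by auto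
    then show "\<exists>y. DERIV \<xi> x :> y \<and> y > 0" by (meson dxi Epos)
  qed
  have main: "(g x * exp (F x)) ^ 2 / 2 = sint 0 x (\<lambda>s. g s * exp (2 * F s)) \<and>
             (x \<noteq> 0 \<longrightarrow> x * (g x * exp (F x)) > 0)" if x: "\<bar>x\<bar> < \<delta>" for x
  proof
    show "(g x * exp (F x)) ^ 2 / 2 = sint 0 x (\<lambda>s. g s * exp (2 * F s))"
      using sint_ftc[of \<delta> "\<lambda>x. \<xi> x ^ 2 / 2" "\<lambda>s. g s * exp (2 * F s)" x, OF dsq x] gE[OF x] xi0 by simp
    show "x \<noteq> 0 \<longrightarrow> x * (g x * exp (F x)) > 0"
    proof
      assume "x \<noteq> 0"
      then consider "x > 0" | "x < 0" by linarith
      then show "x * (g x * exp (F x)) > 0"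
      proof cases
        case 1 then have "\<xi> 0 < \<xi> x" using x dpos by (intro inc) auto
        then show ?thesis using 1 gE[OF x] xi0 by simp
      next
        case 2 then have "\<xi> x < \<xi> 0" using x dpos by (intro inc) auto
        then show ?thesis using 2 gE[OF x] xi0 by (simp add: mult_neg_neg)
      qed
    qed
  qed
  have main': "\<forall>x. \<bar>x\<bar> < \<delta> \<longrightarrow>
     (g x * exp (F x)) ^ 2 / 2 = sint 0 x (\<lambda>s. g s * exp (2 * F s)) \<and>
             (x \<noteq> 0 \<longrightarrow> x * (g x * exp (F x)) > 0)" using main by blast
  have red': "\<forall>x. \<bar>x\<bar> < \<delta> \<longrightarrow>
          - (deriv p1 x * p0 x / p1 x) + q1 x + deriv p0 x - 2 * q2 x * p0 x / p1 x = 0"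
    using red dd0 dd1 by simp
  have V': "\<forall>x y. V (x, y) = (p0 x + p1 x * y, q0 x + q1 x * y + q2 x * y ^ 2)" using V by blast
  show ?thesis
    unfolding zero_urabe_def Let_def
    apply (rule exI[of _ p0], rule exI[of _ p1], rule exI[of _ q0], rule exI[of _ q1], rule exI[of _ q2])
    apply (rule exI[of _ \<delta>])
    apply (intro conjI dpos V' p00 q00 p1nz red')
    using dpos apply simp
    using main' unfolding f_def g_def F_def .
qed
lemma alg:
  fixes p0 p1 p0' p1' q0 q1 q2 E v u Xd :: real
  assumes p1: "p1 \<noteq> 0" and E: "E \<noteq> 0"
  and red: "- (p1' * p0 / p1) + q1 + p0' - 2 * q2 * p0 / p1 = 0"
  and u: "u = (- (q2 * p0 ^ 2 / p1) + q1 * p0 - p1 * q0) * E"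
  and Xd: "Xd = 1 / E * v"
  shows "(((- u * E - v * ((- (q2 + p1') / p1 * E) * Xd)) / (E * E) - p0' * Xd) * p1
          - (v / E - p0) * (p1' * Xd)) / (p1 * p1)
       = q0 + q1 * ((v / E - p0) / p1) + q2 * ((v / E - p0) / p1)^2"
proof -
  have q1: "q1 = p1' * p0 / p1 - p0' + 2 * q2 * p0 / p1" using red by (simp add: algebra_simps)
  show ?thesis unfolding u q1 Xd using p1 E
    by (simp add: field_simps power2_eq_square)
qed

lemma polar:
  fixes z1 z2 \<rho> :: real
  assumes "\<rho> > 0" "norm (z1, z2) = \<rho>"
  obtains b where "z1 = \<rho> * cos b" "z2 = \<rho> * sin b"
proof -
  have "sqrt (z1\<^sup>2 + z2\<^sup>2) = \<rho>" using assms(2) by (simp add: norm_Pair)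
  then have "z1\<^sup>2 + z2\<^sup>2 = \<rho>\<^sup>2" by (metis add_nonneg_nonneg real_sqrt_pow2 zero_le_power2)
  then have "(z1/\<rho>)\<^sup>2 + (z2/\<rho>)\<^sup>2 = 1" using assms(1) by (simp add: power_divide field_simps)
  then obtain b where "z1/\<rho> = cos b" "z2/\<rho> = sin b" by (rule sincos_total_2pi)
  then show ?thesis using that assms(1) by (simp add: field_simps)
qed

lemma norm_polar: "norm (\<rho> * cos b, \<rho> * sin b) = \<bar>\<rho>\<bar>"
proof -
  have "(\<rho> * cos b)\<^sup>2 + (\<rho> * sin b)\<^sup>2 = \<rho>\<^sup>2"
    by (simp add: power_mult_distrib flip: distrib_left)
  then show ?thesis by (simp add: norm_Pair)
qed

lemma xi_inverse:
  fixes \<xi> E :: "real \<Rightarrow> real" and \<delta> :: real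
  assumes dpos: "\<delta> > 0"
  and Epos: "\<And>x. \<bar>x\<bar> < \<delta> \<Longrightarrow> E x > 0"
  and dxi: "\<And>x. \<bar>x\<bar> < \<delta> \<Longrightarrow> (\<xi> has_real_derivative E x) (at x)"
  and xi0: "\<xi> 0 = 0"
  obtains d m \<xi>i where "0 < d" "d < \<delta>" "0 < m"
    "\<And>u. \<bar>u\<bar> < m \<Longrightarrow> \<bar>\<xi>i u\<bar> < d \<and> \<xi> (\<xi>i u) = u"
    "\<And>x. \<bar>x\<bar> < d \<Longrightarrow> \<xi>i (\<xi> x) = x"
    "\<And>u. \<bar>u\<bar> < m \<Longrightarrow> (\<xi>i has_real_derivative 1 / E (\<xi>i u)) (at u)"
proof -
  define d where "d = \<delta> / 2"
  have d: "0 < d" "d < \<delta>" using dpos by (auto simp: d_def)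
  have inc: "\<xi> a < \<xi> b" if "-\<delta> < a" "a < b" "b < \<delta>" for a b
  proof (rule DERIV_pos_imp_increasing[OF \<open>a < b\<close>])
    fix x assume "a \<le> x" "x \<le> b"
    then have "\<bar>x\<bar> < \<delta>" using that by auto
    then show "\<exists>y. DERIV \<xi> x :> y \<and> y > 0" by (meson dxi Epos)
  qed
  have inj: "x = y" if "\<bar>x\<bar> < \<delta>" "\<bar>y\<bar> < \<delta>" "\<xi> x = \<xi> y" for x y
  proof (rule ccontr)
    assume "x \<noteq> y"
    then consider "x < y" | "y < x" by linarith
    then show False
    proof cases
      case 1 then have "\<xi> x < \<xi> y" using that by (intro inc) auto
      then show False using that by simp
    next
      case 2 then have "\<xi> y < \<xi> x" using that by (intro inc) auto
      then show False using that by simp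
    qed
  qed
  have cxi: "isCont \<xi> x" if "\<bar>x\<bar> < \<delta>" for x using DERIV_isCont[OF dxi[OF that]] .
  define m where "m = min (\<xi> d) (- \<xi> (-d))"
  have "\<xi> 0 < \<xi> d" using d by (intro inc) auto
  moreover have "\<xi> (-d) < \<xi> 0" using d by (intro inc) auto
  ultimately have m: "0 < m" using xi0 by (simp add: m_def)
  define \<xi>i where "\<xi>i u = (SOME x. \<bar>x\<bar> < d \<and> \<xi> x = u)" for u
  have ex: "\<exists>x. \<bar>x\<bar> < d \<and> \<xi> x = u" if u: "\<bar>u\<bar> < m" for u
  proof -
    have "\<xi> (-d) \<le> u" "u \<le> \<xi> d" using u by (auto simp: m_def)
    then obtain x where x: "-d \<le> x" "x \<le> d" "\<xi> x = u"
      using IVT[of \<xi> "-d" u d] d cxi by force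
    have "x \<noteq> d" using x u by (auto simp: m_def)
    moreover have "x \<noteq> -d" using x u by (auto simp: m_def)
    ultimately show ?thesis using x by (intro exI[of _ x]) auto
  qed
  have i1: "\<bar>\<xi>i u\<bar> < d \<and> \<xi> (\<xi>i u) = u" if "\<bar>u\<bar> < m" for u
    unfolding \<xi>i_def by (rule someI_ex[OF ex[OF that]])
  have i2: "\<xi>i (\<xi> x) = x" if x: "\<bar>x\<bar> < d" for x
  proof -
    have "\<bar>\<xi>i (\<xi> x)\<bar> < d \<and> \<xi> (\<xi>i (\<xi> x)) = \<xi> x"
      unfolding \<xi>i_def by (rule someI[of _ x]) (use x in simp)
    then show ?thesis using inj x d by force
  qed
  have i3: "(\<xi>i has_real_derivative 1 / E (\<xi>i u)) (at u)" if u: "\<bar>u\<bar> < m" for u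
  proof -
    let ?x = "\<xi>i u"
    have x: "\<bar>?x\<bar> < d" "\<xi> ?x = u" using i1[OF u] by auto
    define e where "e = (d - \<bar>?x\<bar>) / 2"
    have e: "e > 0" using x by (simp add: e_def)
    have zd: "\<bar>z\<bar> < d" if "\<bar>z - ?x\<bar> \<le> e" for z
    proof -
      have "\<bar>z\<bar> \<le> \<bar>z - ?x\<bar> + \<bar>?x\<bar>" by (metis abs_triangle_ineq diff_add_cancel)
      then show ?thesis using x that unfolding e_def by argo
    qed
    have "isCont \<xi>i (\<xi> ?x)"
    proof (rule isCont_inverse_function[where f=\<xi> and g=\<xi>i and x="\<xi>i u", OF e])
      fix z assume "\<bar>z - \<xi>i u\<bar> \<le> e"
      then have "\<bar>z\<bar> < d" by (rule zd)
      then show "\<xi>i (\<xi> z) = z" by (rule i2)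
    next
      fix z assume "\<bar>z - \<xi>i u\<bar> \<le> e"
      then have "\<bar>z\<bar> < d" by (rule zd)
      then have "\<bar>z\<bar> < \<delta>" using d by linarith
      then show "isCont \<xi> z" by (rule cxi)
    qed
    then have cu: "isCont \<xi>i u" using x by simp
    have xd: "\<bar>?x\<bar> < \<delta>" using x d by linarith
    have "DERIV \<xi>i u :> inverse (E ?x)"
    proof (rule DERIV_inverse_function[where a="-m" and b=m and f=\<xi> and g=\<xi>i])
      show "DERIV \<xi> (\<xi>i u) :> E (\<xi>i u)" by (rule dxi[OF xd])
      show "E (\<xi>i u) \<noteq> 0" using Epos[OF xd] by simp
      show "- m < u" "u < m" using u by auto
      show "\<xi> (\<xi>i y) = y" if "- m < y" "y < m" for y using i1[of y] that by auto
      show "isCont \<xi>i u" by (rule cu)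
    qed
    then show ?thesis by (simp add: inverse_eq_divide)
  qed
  show ?thesis using that[OF d m i1 i2 i3] .
qed


lemma gen_iso:
  fixes V :: "real \<times> real \<Rightarrow> real \<times> real"
    and p0 p1 q0 q1 q2 p0' p1' E \<xi> :: "real \<Rightarrow> real" and \<delta> :: real
  assumes dpos: "\<delta> > 0"
  and V: "\<And>x y. V (x,y) = (p0 x + p1 x * y, q0 x + q1 x * y + q2 x * y^2)"
  and p00: "p0 0 = 0"
  and p1nz: "\<And>x. \<bar>x\<bar> < \<delta> \<Longrightarrow> p1 x \<noteq> 0"
  and dp0: "\<And>x. \<bar>x\<bar> < \<delta> \<Longrightarrow> (p0 has_real_derivative p0' x) (at x)"
  and dp1: "\<And>x. \<bar>x\<bar> < \<delta> \<Longrightarrow> (p1 has_real_derivative p1' x) (at x)"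
  and red: "\<And>x. \<bar>x\<bar> < \<delta> \<Longrightarrow> - (p1' x * p0 x / p1 x) + q1 x + p0' x - 2 * q2 x * p0 x / p1 x = 0"
  and Epos: "\<And>x. \<bar>x\<bar> < \<delta> \<Longrightarrow> E x > 0"
  and dE: "\<And>x. \<bar>x\<bar> < \<delta> \<Longrightarrow> (E has_real_derivative (- (q2 x + p1' x) / p1 x * E x)) (at x)"
  and dxi: "\<And>x. \<bar>x\<bar> < \<delta> \<Longrightarrow> (\<xi> has_real_derivative E x) (at x)"
  and xi0: "\<xi> 0 = 0"
  and gxi: "\<And>x. \<bar>x\<bar> < \<delta> \<Longrightarrow> (- (q2 x * p0 x ^ 2 / p1 x) + q1 x * p0 x - p1 x * q0 x) * E x = \<xi> x"
  shows "isochronous_center V"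
proof -
  obtain d m \<xi>i where d: "0 < d" "d < \<delta>" and m: "0 < m"
    and i1: "\<And>u. \<bar>u\<bar> < m \<Longrightarrow> \<bar>\<xi>i u\<bar> < d \<and> \<xi> (\<xi>i u) = u"
    and i2: "\<And>x. \<bar>x\<bar> < d \<Longrightarrow> \<xi>i (\<xi> x) = x"
    and i3: "\<And>u. \<bar>u\<bar> < m \<Longrightarrow> (\<xi>i has_real_derivative 1 / E (\<xi>i u)) (at u)"
    using xi_inverse[of \<delta> E \<xi>, OF dpos Epos dxi xi0] by metis
  have xd: "\<bar>\<xi>i u\<bar> < \<delta>" if "\<bar>u\<bar> < m" for u using i1[OF that] d by linarith
  define \<Psi> where "\<Psi> z = (\<xi>i (fst z), (snd z / E (\<xi>i (fst z)) - p0 (\<xi>i (fst z))) / p1 (\<xi>i (fst z)))" for z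
  define \<Phi> where "\<Phi> q = (\<xi> (fst q), E (fst q) * (p0 (fst q) + p1 (fst q) * snd q))" for q
  define D where "D = {z::real\<times>real. \<bar>fst z\<bar> < m}"
  define W where "W = {q::real\<times>real. \<bar>fst q\<bar> < d}"
  have PhiPsi: "\<Phi> (\<Psi> z) = z" if "\<bar>fst z\<bar> < m" for z
  proof -
    have "\<xi> (\<xi>i (fst z)) = fst z" using i1[OF that] by simp
    moreover have "E (\<xi>i (fst z)) > 0" "p1 (\<xi>i (fst z)) \<noteq> 0" using xd[OF that] Epos p1nz by auto
    ultimately show ?thesis by (simp add: \<Phi>_def \<Psi>_def field_simps prod_eq_iff)
  qed
  have PsiPhi: "\<Psi> (\<Phi> q) = q" if "\<bar>fst q\<bar> < d" for q
  proof -
    have xq: "\<bar>fst q\<bar> < \<delta>" using that d by linarith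
    have "\<xi>i (\<xi> (fst q)) = fst q" using i2[OF that] .
    moreover have "E (fst q) > 0" "p1 (fst q) \<noteq> 0" using xq Epos p1nz by auto
    ultimately show ?thesis by (simp add: \<Phi>_def \<Psi>_def field_simps prod_eq_iff)
  qed
  have Psi_W: "\<Psi> z \<in> W" if "\<bar>fst z\<bar> < m" for z using i1[OF that] by (simp add: \<Psi>_def W_def)
  have Phi0: "\<Phi> (0,0) = (0,0)" using xi0 p00 by (simp add: \<Phi>_def)
  have Psi0: "\<Psi> (0,0) = (0,0)"
  proof -
    have "\<xi>i 0 = 0" using i2[of 0] xi0 d by simp
    then show ?thesis using p00 by (simp add: \<Psi>_def)
  qed
  have cxi: "isCont \<xi>i u" if "\<bar>u\<bar> < m" for u using DERIV_isCont[OF i3[OF that]] .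
  have contPsi: "continuous_on D \<Psi>"
  proof (rule continuous_at_imp_continuous_on, rule ballI)
    fix z assume "z \<in> D"
    then have z: "\<bar>fst z\<bar> < m" by (simp add: D_def)
    have cX: "isCont (\<lambda>z. \<xi>i (fst z)) z" by (rule isCont_o2[where f=fst and a=z and g=\<xi>i, OF _ cxi[OF z]]) (intro continuous_intros)
    have cE: "isCont (\<lambda>z. E (\<xi>i (fst z))) z"
      by (rule isCont_o2[where f="\<lambda>z. \<xi>i (fst z)" and a=z and g=E, OF cX]) (rule DERIV_isCont[OF dE[OF xd[OF z]]])
    have cp0: "isCont (\<lambda>z. p0 (\<xi>i (fst z))) z"
      by (rule isCont_o2[where f="\<lambda>z. \<xi>i (fst z)" and a=z and g=p0, OF cX]) (rule DERIV_isCont[OF dp0[OF xd[OF z]]])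
    have cp1: "isCont (\<lambda>z. p1 (\<xi>i (fst z))) z"
      by (rule isCont_o2[where f="\<lambda>z. \<xi>i (fst z)" and a=z and g=p1, OF cX]) (rule DERIV_isCont[OF dp1[OF xd[OF z]]])
    have nz: "E (\<xi>i (fst z)) \<noteq> 0" "p1 (\<xi>i (fst z)) \<noteq> 0" using xd[OF z] Epos p1nz by (auto simp: less_imp_neq[symmetric])
    have "isCont (\<lambda>z. (\<xi>i (fst z), (snd z / E (\<xi>i (fst z)) - p0 (\<xi>i (fst z))) / p1 (\<xi>i (fst z)))) z"
      by (intro continuous_Pair cX isCont_divide continuous_diff cE cp0 cp1 nz continuous_snd continuous_ident)
    then show "isCont \<Psi> z" unfolding \<Psi>_def .
  qed
  have contPhi: "continuous_on W \<Phi>"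
  proof (rule continuous_at_imp_continuous_on, rule ballI)
    fix q assume "q \<in> W"
    then have q: "\<bar>fst q\<bar> < \<delta>" using d by (simp add: W_def)
    have c1: "isCont (\<lambda>q. \<xi> (fst q)) q" by (rule isCont_o2[where f=fst and a=q and g=\<xi>, OF _ DERIV_isCont[OF dxi[OF q]]]) (intro continuous_intros)
    have c2: "isCont (\<lambda>q. E (fst q)) q" by (rule isCont_o2[where f=fst and a=q and g=E, OF _ DERIV_isCont[OF dE[OF q]]]) (intro continuous_intros)
    have c3: "isCont (\<lambda>q. p0 (fst q)) q" by (rule isCont_o2[where f=fst and a=q and g=p0, OF _ DERIV_isCont[OF dp0[OF q]]]) (intro continuous_intros)
    have c4: "isCont (\<lambda>q. p1 (fst q)) q" by (rule isCont_o2[where f=fst and a=q and g=p1, OF _ DERIV_isCont[OF dp1[OF q]]]) (intro continuous_intros)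
    have "isCont (\<lambda>q. (\<xi> (fst q), E (fst q) * (p0 (fst q) + p1 (fst q) * snd q))) q"
      by (intro continuous_Pair c1 continuous_mult continuous_add c2 c3 c4 continuous_snd continuous_ident)
    then show "isCont \<Phi> q" unfolding \<Phi>_def .
  qed
  have openW: "open W" unfolding W_def by (intro open_Collect_less continuous_intros)
  define U where "U = W \<inter> \<Phi> -` ball 0 m"
  have openU: "open U" unfolding U_def by (rule continuous_open_preimage[OF contPhi openW open_ball])
  have U0: "(0,0) \<in> U" using Phi0 d m by (simp add: U_def W_def zero_prod_def[symmetric])
  have orbit: "\<exists>x :: real \<Rightarrow> real \<times> real.
          (\<forall>t. (x has_vector_derivative V (x t)) (at t)) \<and> x 0 = p \<and>
          (\<forall>t. x (t + 2*pi) = x t) \<and> (\<forall>s. 0 < s \<and> s < 2*pi \<longrightarrow> x s \<noteq> p) \<and>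
          surrounds_origin (range x)" if pU: "p \<in> U - {(0,0)}" for p
  proof -
    have pW: "p \<in> W" and pB: "\<Phi> p \<in> ball 0 m" and pnz: "p \<noteq> (0,0)" using pU by (auto simp: U_def)
    have pd: "\<bar>fst p\<bar> < d" using pW by (simp add: W_def)
    define w1 where "w1 = fst (\<Phi> p)"
    define w2 where "w2 = snd (\<Phi> p)"
    define \<rho> where "\<rho> = norm (\<Phi> p)"
    have wdef: "\<Phi> p = (w1, w2)" by (simp add: w1_def w2_def)
    have \<rho>m: "\<rho> < m" using pB by (simp add: \<rho>_def dist_0_norm)
    have \<rho>pos: "\<rho> > 0"
    proof (rule ccontr)
      assume "\<not> \<rho> > 0"
      then have "\<Phi> p = 0" by (simp add: \<rho>_def)
      then have "\<Psi> (\<Phi> p) = (0,0)" using Psi0 by (simp add: zero_prod_def)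
      then show False using PsiPhi[OF pd] pnz by simp
    qed
    have nw: "norm (w1, w2) = \<rho>" by (simp only: \<rho>_def wdef)
    obtain a where a: "w1 = \<rho> * cos a" "w2 = \<rho> * sin a"
      using polar[OF \<rho>pos nw] by blast
    define u where "u t = \<rho> * cos (a - t)" for t
    define v where "v t = \<rho> * sin (a - t)" for t
    define \<gamma> where "\<gamma> t = \<Psi> (u t, v t)" for t
    have um: "\<bar>u t\<bar> < m" for t
    proof -
      have "\<bar>u t\<bar> = \<rho> * \<bar>cos (a - t)\<bar>" using \<rho>pos by (simp add: u_def abs_mult)
      also have "\<dots> \<le> \<rho> * 1" using \<rho>pos by (intro mult_left_mono abs_cos_le_one) auto
      finally show ?thesis using \<rho>m by simp
    qed
    have Phigam: "\<Phi> (\<gamma> t) = (u t, v t)" for t unfolding \<gamma>_def by (rule PhiPsi) (use um in simp)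
    have normuv: "norm (u t, v t) = \<rho>" for t using norm_polar[of \<rho> "a - t"] \<rho>pos by (simp add: u_def v_def)
    have \<gamma>eq: "\<gamma> = (\<lambda>t. (\<xi>i (u t), (v t / E (\<xi>i (u t)) - p0 (\<xi>i (u t))) / p1 (\<xi>i (u t))))"
      by (rule ext) (simp add: \<gamma>_def \<Psi>_def)
    have deriv: "(\<gamma> has_vector_derivative V (\<gamma> t)) (at t)" for t
    proof -
      let ?X = "\<xi>i (u t)"
      have xt: "\<bar>?X\<bar> < \<delta>" by (rule xd[OF um])
      have du: "(u has_real_derivative v t) (at t)" unfolding u_def v_def
        by (auto intro!: derivative_eq_intros)
      have dv: "(v has_real_derivative - u t) (at t)" unfolding u_def v_def
        by (auto intro!: derivative_eq_intros)
      have dX: "((\<lambda>t. \<xi>i (u t)) has_real_derivative 1 / E ?X * v t) (at t)"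
        using DERIV_chain2[OF i3[OF um] du] .
      have dEX: "((\<lambda>t. E (\<xi>i (u t))) has_real_derivative (- (q2 ?X + p1' ?X) / p1 ?X * E ?X) * (1 / E ?X * v t)) (at t)"
        using DERIV_chain2[OF dE[OF xt] dX] .
      have dp0X: "((\<lambda>t. p0 (\<xi>i (u t))) has_real_derivative p0' ?X * (1 / E ?X * v t)) (at t)"
        using DERIV_chain2[OF dp0[OF xt] dX] .
      have dp1X: "((\<lambda>t. p1 (\<xi>i (u t))) has_real_derivative p1' ?X * (1 / E ?X * v t)) (at t)"
        using DERIV_chain2[OF dp1[OF xt] dX] .
      have Enz: "E (\<xi>i (u t)) \<noteq> 0" using Epos[OF xt] by simp
      have p1nz': "p1 (\<xi>i (u t)) \<noteq> 0" using p1nz[OF xt] .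
      have dZ: "((\<lambda>t. v t / E (\<xi>i (u t))) has_real_derivative
           (- u t * E ?X - v t * ((- (q2 ?X + p1' ?X) / p1 ?X * E ?X) * (1 / E ?X * v t))) / (E ?X * E ?X)) (at t)"
        using DERIV_divide[OF dv dEX Enz] .
      have dN: "((\<lambda>t. v t / E (\<xi>i (u t)) - p0 (\<xi>i (u t))) has_real_derivative
           (- u t * E ?X - v t * ((- (q2 ?X + p1' ?X) / p1 ?X * E ?X) * (1 / E ?X * v t))) / (E ?X * E ?X)
            - p0' ?X * (1 / E ?X * v t)) (at t)"
        using DERIV_diff[OF dZ dp0X] .
      have dY: "((\<lambda>t. (v t / E (\<xi>i (u t)) - p0 (\<xi>i (u t))) / p1 (\<xi>i (u t))) has_real_derivative
           (((- u t * E ?X - v t * ((- (q2 ?X + p1' ?X) / p1 ?X * E ?X) * (1 / E ?X * v t))) / (E ?X * E ?X)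
            - p0' ?X * (1 / E ?X * v t)) * p1 ?X - (v t / E ?X - p0 ?X) * (p1' ?X * (1 / E ?X * v t))) / (p1 ?X * p1 ?X)) (at t)"
        using DERIV_divide[OF dN dp1X p1nz'] .
      have uX: "u t = (- (q2 ?X * p0 ?X ^ 2 / p1 ?X) + q1 ?X * p0 ?X - p1 ?X * q0 ?X) * E ?X"
        using gxi[OF xt] i1[OF um] by simp
      have eq: "(((- u t * E ?X - v t * ((- (q2 ?X + p1' ?X) / p1 ?X * E ?X) * (1 / E ?X * v t))) / (E ?X * E ?X)
            - p0' ?X * (1 / E ?X * v t)) * p1 ?X - (v t / E ?X - p0 ?X) * (p1' ?X * (1 / E ?X * v t))) / (p1 ?X * p1 ?X)
          = q0 ?X + q1 ?X * ((v t / E ?X - p0 ?X) / p1 ?X) + q2 ?X * ((v t / E ?X - p0 ?X) / p1 ?X)^2"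
        by (rule alg[OF p1nz[OF xt] _ red[OF xt] uX refl]) (use Epos[OF xt] in simp)
      have dY': "((\<lambda>t. (v t / E (\<xi>i (u t)) - p0 (\<xi>i (u t))) / p1 (\<xi>i (u t))) has_real_derivative
           q0 ?X + q1 ?X * ((v t / E ?X - p0 ?X) / p1 ?X) + q2 ?X * ((v t / E ?X - p0 ?X) / p1 ?X)^2) (at t)"
        using DERIV_cong[OF dY eq] .
      have eq1: "1 / E ?X * v t = p0 ?X + p1 ?X * ((v t / E ?X - p0 ?X) / p1 ?X)"
        using Epos[OF xt] p1nz[OF xt] by (simp add: field_simps)
      have "((\<lambda>t. (\<xi>i (u t), (v t / E (\<xi>i (u t)) - p0 (\<xi>i (u t))) / p1 (\<xi>i (u t)))) has_vector_derivative
             (1 / E ?X * v t, q0 ?X + q1 ?X * ((v t / E ?X - p0 ?X) / p1 ?X) + q2 ?X * ((v t / E ?X - p0 ?X) / p1 ?X)^2)) (at t)"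
        by (rule has_vector_derivative_Pair[OF dX[unfolded has_real_derivative_iff_has_vector_derivative]
                 dY'[unfolded has_real_derivative_iff_has_vector_derivative]])
      moreover have "V (\<gamma> t) = (1 / E ?X * v t, q0 ?X + q1 ?X * ((v t / E ?X - p0 ?X) / p1 ?X) + q2 ?X * ((v t / E ?X - p0 ?X) / p1 ?X)^2)"
        unfolding \<gamma>eq V eq1[symmetric] by simp
      ultimately show ?thesis unfolding \<gamma>eq by simp
    qed
    have per: "\<gamma> (t + 2*pi) = \<gamma> t" for t
    proof -
      have "cos (a - (t + 2*pi)) = cos (a - t)" "sin (a - (t + 2*pi)) = sin (a - t)"
        by (simp_all add: cos_diff sin_diff)
      then show ?thesis by (simp add: \<gamma>_def u_def v_def)
    qed
    have start: "\<gamma> 0 = p"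
    proof -
      have "\<gamma> 0 = \<Psi> (\<Phi> p)" by (simp add: \<gamma>_def u_def v_def wdef a)
      then show ?thesis using PsiPhi[OF pd] by simp
    qed
    have minper: "\<gamma> s \<noteq> p" if s: "0 < s" "s < 2*pi" for s
    proof
      assume "\<gamma> s = p"
      then have "(u s, v s) = (w1, w2)" using Phigam[of s] wdef by simp
      then have "\<rho> * cos (a - s) = \<rho> * cos a" "\<rho> * sin (a - s) = \<rho> * sin a"
        using a by (simp_all add: u_def v_def)
      then have cs: "cos (a - s) = cos a" "sin (a - s) = sin a" using \<rho>pos by simp_all
      have "cos s = cos (a - (a - s))" by simp
      also have "\<dots> = cos a * cos (a - s) + sin a * sin (a - s)" by (rule cos_diff)
      also have "\<dots> = 1" using cs by (simp add: power2_eq_square[symmetric])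
      finally obtain n :: int where n: "s = real_of_int n * 2 * pi" using cos_one_2pi_int by blast
      have "0 < real_of_int n * (2 * pi)" "real_of_int n * (2*pi) < 1 * (2*pi)" using s n by (simp_all add: mult.assoc)
      then have "0 < real_of_int n" "real_of_int n < 1"
        using pi_gt_zero by (simp_all add: zero_less_mult_iff)
      then have "0 < n" "n < 1" by simp_all
      then show False by linarith
    qed
    have S0: "(0,0) \<notin> range \<gamma>"
    proof
      assume "(0,0) \<in> range \<gamma>"
      then obtain t where "\<gamma> t = (0,0)" by auto
      then have "(u t, v t) = (0,0)" using Phigam[of t] Phi0 by simp
      then show False using normuv[of t] \<rho>pos by simp
    qed
    define A where "A = \<Psi> ` ball 0 \<rho>"
    define K where "K = \<Psi> ` cball 0 \<rho>"
    have cbD: "\<bar>fst z\<bar> < m" if "z \<in> cball (0::real\<times>real) \<rho>" for z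
    proof -
      have "norm (fst z) \<le> norm (fst z, snd z)" by (rule norm_fst_le)
      then have "\<bar>fst z\<bar> \<le> norm z" by simp
      moreover have "norm z \<le> \<rho>" using that by (simp add: dist_0_norm)
      ultimately show ?thesis using \<rho>m by linarith
    qed
    have cballD: "cball 0 \<rho> \<subseteq> D" using cbD by (auto simp: D_def)
    have compK: "compact K" unfolding K_def
      by (rule compact_continuous_image[OF continuous_on_subset[OF contPsi cballD] compact_cball])
    have AK: "A \<subseteq> K" unfolding A_def K_def by (rule image_mono[OF ball_subset_cball])
    have Aeq: "A = W \<inter> \<Phi> -` ball 0 \<rho>"
    proof
      show "A \<subseteq> W \<inter> \<Phi> -` ball 0 \<rho>"
      proof
        fix q assume "q \<in> A"
        then obtain z where z: "z \<in> ball 0 \<rho>" "q = \<Psi> z" by (auto simp: A_def)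
        then have zm: "\<bar>fst z\<bar> < m" using cbD by auto
        show "q \<in> W \<inter> \<Phi> -` ball 0 \<rho>" using Psi_W[OF zm] PhiPsi[OF zm] z by simp
      qed
    next
      show "W \<inter> \<Phi> -` ball 0 \<rho> \<subseteq> A"
      proof
        fix q assume q: "q \<in> W \<inter> \<Phi> -` ball 0 \<rho>"
        then have "q = \<Psi> (\<Phi> q)" using PsiPhi by (simp add: W_def)
        then show "q \<in> A" using q unfolding A_def by blast
      qed
    qed
    have openA: "open A" unfolding Aeq by (rule continuous_open_preimage[OF contPhi openW open_ball])
    have A0: "(0,0) \<in> A"
    proof -
      have "(0::real,0::real) \<in> ball 0 \<rho>" using \<rho>pos by (simp add: zero_prod_def[symmetric])
      then show ?thesis using Psi0 unfolding A_def by (metis image_eqI)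
    qed
    have frontA: "frontier A \<subseteq> range \<gamma>"
    proof
      fix q assume qf: "q \<in> frontier A"
      then have "q \<in> closure A" "q \<notin> A" using openA by (auto simp: frontier_def interior_open)
      then have "q \<in> K" using closure_minimal[OF AK compact_imp_closed[OF compK]] by auto
      then obtain z where z: "z \<in> cball 0 \<rho>" "q = \<Psi> z" by (auto simp: K_def)
      have "z \<notin> ball 0 \<rho>" using z \<open>q \<notin> A\<close> by (auto simp: A_def)
      then have "norm (fst z, snd z) = \<rho>" using z by (simp add: dist_0_norm)
      then obtain b where b: "fst z = \<rho> * cos b" "snd z = \<rho> * sin b" using polar[OF \<rho>pos] by blast
      have zb: "z = (\<rho> * cos b, \<rho> * sin b)" using b by (metis prod.collapse)
      have "\<gamma> (a - b) = q" using z(2) zb by (simp add: \<gamma>_def u_def v_def)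
      then show "q \<in> range \<gamma>" by (metis rangeI)
    qed
    have surr: "surrounds_origin (range \<gamma>)"
    proof -
      define C where "C = connected_component_set (- range \<gamma>) (0,0)"
      have C0: "(0,0) \<in> C" using S0 by (simp add: C_def)
      have CA: "C \<subseteq> A"
      proof (rule ccontr)
        assume "\<not> C \<subseteq> A"
        then have "C - A \<noteq> {}" by blast
        moreover have "C \<inter> A \<noteq> {}" using C0 A0 by blast
        ultimately have "C \<inter> frontier A \<noteq> {}"
          by (intro connected_Int_frontier) (auto simp: C_def connected_connected_component)
        moreover have "C \<subseteq> - range \<gamma>" unfolding C_def by (rule connected_component_subset)
        ultimately show False using frontA by blast
      qed
      have "bounded C" using bounded_subset[OF compact_imp_bounded[OF compK]] CA AK by blast
      then show ?thesis unfolding surrounds_origin_def C_def using S0 by simp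
    qed
    show ?thesis
      by (rule exI[of _ \<gamma>]) (use deriv start per minper surr in auto)
  qed
  show ?thesis unfolding isochronous_center_def
    by (rule exI[of _ U], rule exI[of _ "2*pi"]) (use openU U0 orbit in auto)
qed


lemma gen:
  fixes V :: "real \<times> real \<Rightarrow> real \<times> real"
    and pa pb qa qb qc dpa dpb E \<xi> :: "real \<Rightarrow> real" and \<delta> :: real
  assumes dpos: "\<delta> > 0"
  and V: "\<And>x y. V (x,y) = (pa x + pb x * y, qa x + qb x * y + qc x * y^2)"
  and p00: "pa 0 = 0" and q00: "qa 0 = 0"
  and p1nz: "\<And>x. \<bar>x\<bar> < \<delta> \<Longrightarrow> pb x \<noteq> 0"
  and dp0: "\<And>x. \<bar>x\<bar> < \<delta> \<Longrightarrow> (pa has_real_derivative dpa x) (at x)"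
  and dp1: "\<And>x. \<bar>x\<bar> < \<delta> \<Longrightarrow> (pb has_real_derivative dpb x) (at x)"
  and red: "\<And>x. \<bar>x\<bar> < \<delta> \<Longrightarrow> - (dpb x * pa x / pb x) + qb x + dpa x - 2 * qc x * pa x / pb x = 0"
  and Epos: "\<And>x. \<bar>x\<bar> < \<delta> \<Longrightarrow> E x > 0" and E0: "E 0 = 1"
  and dE: "\<And>x. \<bar>x\<bar> < \<delta> \<Longrightarrow> (E has_real_derivative (- (qc x + dpb x) / pb x * E x)) (at x)"
  and dxi: "\<And>x. \<bar>x\<bar> < \<delta> \<Longrightarrow> (\<xi> has_real_derivative E x) (at x)"
  and xi0: "\<xi> 0 = 0"
  and gxi: "\<And>x. \<bar>x\<bar> < \<delta> \<Longrightarrow> (- (qc x * pa x ^ 2 / pb x) + qb x * pa x - pb x * qa x) * E x = \<xi> x"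
  shows "iso_zero_urabe V"
  unfolding iso_zero_urabe_def
proof
  show "isochronous_center V"
    by (rule gen_iso[OF dpos V p00 p1nz dp0 dp1 red Epos dE dxi xi0 gxi])
  show "zero_urabe V"
    by (rule gen_zero_urabe[OF dpos V p00 q00 p1nz dp0 dp1 red Epos E0 dE dxi xi0 gxi])
qed


lemma dinvpow:
  fixes c x :: real
  assumes w: "1 - c*x \<noteq> 0"
  shows "((\<lambda>x. 1 / (1 - c*x)^k) has_real_derivative (real k * c / (1 - c*x)) * (1 / (1 - c*x)^k)) (at x)"
proof (cases k)
  case 0 then show ?thesis by simp
next
  case (Suc j)
  have d1: "((\<lambda>x. 1 - c*x) has_real_derivative - c) (at x)" by (auto intro!: derivative_eq_intros)
  have d2: "((\<lambda>x. (1 - c*x)^k) has_real_derivative real k * (1 - c*x) ^ (k - Suc 0) * (- c)) (at x)"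
    using DERIV_chain2[OF DERIV_pow d1] .
  have "((\<lambda>x. 1 / (1 - c*x)^k) has_real_derivative
     (0 * (1 - c*x)^k - 1 * (real k * (1 - c*x)^(k - Suc 0) * (- c))) / ((1 - c*x)^k * (1 - c*x)^k)) (at x)"
    by (rule DERIV_divide[OF DERIV_const d2]) (use w in simp)
  moreover have "(0 * (1 - c*x)^k - 1 * (real k * (1 - c*x)^(k - Suc 0) * (- c))) / ((1 - c*x)^k * (1 - c*x)^k)
     = (real k * c / (1 - c*x)) * (1 / (1 - c*x)^k)"
  proof -
    define W where "W = 1 - c*x"
    have W: "W \<noteq> 0" using w by (simp add: W_def)
    have Wk: "W^k = W * W^j" by (simp add: Suc)
    have "(0 * W^k - 1 * (real k * W^(k - Suc 0) * (- c))) / (W^k * W^k)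
        = (real k * c * W^j) / ((W * W^j) * W^k)" unfolding Wk by (simp add: Suc)
    also have "\<dots> = (real k * c / W) * (1 / W^k)" using W by (simp add: field_simps)
    finally show ?thesis by (simp add: W_def)
  qed
  ultimately show ?thesis by simp
qed

lemma dquot:
  fixes P P' :: "real \<Rightarrow> real" and c x :: real
  assumes dP: "(P has_real_derivative P' x) (at x)" and w: "1 - c*x \<noteq> 0"
  and id: "P' x * (1 - c*x) + real n * c * P x = 1" and m: "m = Suc n"
  shows "((\<lambda>x. P x / (1 - c*x)^n) has_real_derivative 1 / (1 - c*x)^m) (at x)"
proof (cases n)
  case 0
  have "P' x * (1 - c*x) = 1" using id 0 by simp
  then have "P' x = 1 / (1 - c*x)" using w by (simp add: field_simps)
  then show ?thesis using dP m 0 by simp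
next
  case (Suc j)
  have d1: "((\<lambda>x. 1 - c*x) has_real_derivative - c) (at x)" by (auto intro!: derivative_eq_intros)
  have d2: "((\<lambda>x. (1 - c*x)^n) has_real_derivative real n * (1 - c*x) ^ (n - Suc 0) * (- c)) (at x)"
    using DERIV_chain2[OF DERIV_pow d1] .
  have "((\<lambda>x. P x / (1 - c*x)^n) has_real_derivative
      (P' x * (1 - c*x)^n - P x * (real n * (1 - c*x)^(n - Suc 0) * (- c))) / ((1 - c*x)^n * (1 - c*x)^n)) (at x)"
    by (rule DERIV_divide[OF dP d2]) (use w in simp)
  moreover have "(P' x * (1 - c*x)^n - P x * (real n * (1 - c*x)^(n - Suc 0) * (- c))) / ((1 - c*x)^n * (1 - c*x)^n)
      = 1 / (1 - c*x)^m"
  proof -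
    have "(P' x * (1 - c*x)^n - P x * (real n * (1 - c*x)^(n - Suc 0) * (- c)))
        = (1 - c*x)^j * (P' x * (1 - c*x) + real n * c * P x)"
      unfolding Suc by (simp add: algebra_simps)
    also have "\<dots> = (1 - c*x)^j" using id by simp
    finally have num: "(P' x * (1 - c*x)^n - P x * (real n * (1 - c*x)^(n - Suc 0) * (- c))) = (1 - c*x)^j" .
    define W where "W = 1 - c*x"
    have W: "W \<noteq> 0" "W^j \<noteq> 0" using w by (simp_all add: W_def)
    have Wn: "W^n = W * W^j" "W^m = W * (W * W^j)" by (simp_all add: Suc m)
    have "W^j / (W^n * W^n) = 1 / W^m" unfolding Wn using W by (simp add: field_simps)
    then show ?thesis unfolding num by (simp add: W_def)
  qed
  ultimately show ?thesis by simp
qed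

lemma divpow: "(w::real) \<noteq> 0 \<Longrightarrow> (w * P) * (1 / w^m) = P / w^n" if "m = Suc n"
  using that by (simp add: field_simps power_Suc)

lemma family:
  fixes V :: "real \<times> real \<Rightarrow> real \<times> real" and c qc :: real and k n :: nat
    and pa qa qb dpa Pr Pr' :: "real \<Rightarrow> real"
  assumes V: "\<And>x y. V (x,y) = (pa x + (c*x - 1) * y, qa x + qb x * y + qc * y^2)"
  and pa0: "pa 0 = 0" and qa0: "qa 0 = 0"
  and dpa: "\<And>x. (pa has_real_derivative dpa x) (at x)"
  and red: "\<And>x. 1 - c*x > 0 \<Longrightarrow> - (c * pa x / (c*x - 1)) + qb x + dpa x - 2 * qc * pa x / (c*x - 1) = 0"
  and kc: "qc + c = real k * c" and k: "k = Suc n"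
  and dPr: "\<And>x. (Pr has_real_derivative Pr' x) (at x)"
  and idP: "\<And>x. 1 - c*x > 0 \<Longrightarrow> Pr' x * (1 - c*x) + real n * c * Pr x = 1"
  and gx: "\<And>x. 1 - c*x > 0 \<Longrightarrow> - (qc * pa x ^ 2 / (c*x - 1)) + qb x * pa x - (c*x - 1) * qa x = (1 - c*x) * Pr x"
  and Pr0: "Pr 0 = 0"
  shows "iso_zero_urabe V"
proof (rule gen[where pa=pa and pb="\<lambda>x. c*x - 1" and qa=qa and qb=qb and qc="\<lambda>x. qc"
   and dpa=dpa and dpb="\<lambda>x. c" and E="\<lambda>x. 1 / (1 - c*x)^k"
   and \<xi>="\<lambda>x. Pr x / (1 - c*x)^n" and \<delta>="1 / (1 + \<bar>c\<bar>)"])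
  have pos: "1 - c*x > 0" if "\<bar>x\<bar> < 1 / (1 + \<bar>c\<bar>)" for x
  proof -
    have "\<bar>c*x\<bar> = \<bar>c\<bar> * \<bar>x\<bar>" by (simp add: abs_mult)
    also have "\<dots> \<le> \<bar>c\<bar> * (1 / (1 + \<bar>c\<bar>))" using that by (intro mult_left_mono) auto
    also have "\<dots> < 1" by (simp add: field_simps)
    finally show ?thesis by linarith
  qed
  show "0 < 1 / (1 + \<bar>c\<bar>)" by (simp add: add_pos_nonneg)
  show "\<And>x y. V (x, y) = (pa x + (c*x - 1) * y, qa x + qb x * y + qc * y^2)" by (rule V)
  show "pa 0 = 0" "qa 0 = 0" by (fact pa0, fact qa0)
  show "1 / (1 - c*0)^k = 1" by simp
  show "Pr 0 / (1 - c*0)^n = 0" using Pr0 by simp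
  fix x :: real assume x: "\<bar>x\<bar> < 1 / (1 + \<bar>c\<bar>)"
  note px = pos[OF x]
  have wnz: "1 - c*x \<noteq> 0" using px by simp
  show "c*x - 1 \<noteq> 0" using px by simp
  show "(pa has_real_derivative dpa x) (at x)" by (rule dpa)
  show "((\<lambda>x. c*x - 1) has_real_derivative c) (at x)"
    by (auto intro!: derivative_eq_intros)
  show "- (c * pa x / (c*x - 1)) + qb x + dpa x - 2 * qc * pa x / (c*x - 1) = 0" by (rule red[OF px])
  show "1 / (1 - c*x)^k > 0" using px by simp
  have "- (qc + c) / (c*x - 1) = real k * c / (1 - c*x)"
    unfolding kc using wnz by (simp add: field_simps)
  then show "((\<lambda>x. 1 / (1 - c*x)^k) has_real_derivative (- (qc + c) / (c*x - 1) * (1 / (1 - c*x)^k))) (at x)"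
    using dinvpow[OF wnz, of k] by simp
  show "((\<lambda>x. Pr x / (1 - c*x)^n) has_real_derivative 1 / (1 - c*x)^k) (at x)"
    by (rule dquot[where P=Pr and P'=Pr' and c=c and x=x and n=n and m=k, OF dPr wnz idP[OF px] k])
  show "(- (qc * pa x ^ 2 / (c*x - 1)) + qb x * pa x - (c*x - 1) * qa x) * (1 / (1 - c*x)^k) = Pr x / (1 - c*x)^n"
    unfolding gx[OF px] by (rule divpow[OF k wnz])
qed

lemma sys1: "iso_zero_urabe (\<lambda>(x, y).
      (- y + a*x*y + x^2 - a*x^3,
       x + 4*a*y^2 - 2*x*y - 3/2*a*x^2 - 6*a*x^2*y + (2 + a^2)*x^3 + (2*a - a^3/4)*x^4))"
proof (rule family[where c=a and qc="4*a" and k=5 and n=4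
   and pa="\<lambda>x. x^2 - a*x^3" and qa="\<lambda>x. x - 3/2*a*x^2 + (2 + a^2)*x^3 + (2*a - a^3/4)*x^4"
   and qb="\<lambda>x. - 2*x - 6*a*x^2" and dpa="\<lambda>x. 2*x - 3*a*x^2"
   and Pr="\<lambda>x. x - 3/2*a*x^2 + a^2*x^3 - a^3*x^4/4" and Pr'="\<lambda>x. 1 - 3*a*x + 3*a^2*x^2 - a^3*x^3"])
  fix x y :: real
  show "(case (x, y) of (x, y) \<Rightarrow> (- y + a*x*y + x^2 - a*x^3,
       x + 4*a*y^2 - 2*x*y - 3/2*a*x^2 - 6*a*x^2*y + (2 + a^2)*x^3 + (2*a - a^3/4)*x^4)) =
     (x^2 - a*x^3 + (a*x - 1) * y, x - 3/2*a*x^2 + (2 + a^2)*x^3 + (2*a - a^3/4)*x^4 + (- 2*x - 6*a*x^2) * y + 4*a * y^2)"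
    by (simp add: algebra_simps)
next
  fix x :: real
  show "((\<lambda>x. x^2 - a*x^3) has_real_derivative 2*x - 3*a*x^2) (at x)"
    by (auto intro!: derivative_eq_intros simp: eval_nat_numeral)
  show "((\<lambda>x. x - 3/2*a*x^2 + a^2*x^3 - a^3*x^4/4) has_real_derivative 1 - 3*a*x + 3*a^2*x^2 - a^3*x^3) (at x)"
    by (auto intro!: derivative_eq_intros simp: eval_nat_numeral algebra_simps)
next
  fix x :: real assume px: "1 - a*x > 0"
  show "- (a * (x^2 - a*x^3) / (a*x - 1)) + (- 2*x - 6*a*x^2) + (2*x - 3*a*x^2) - 2 * (4*a) * (x^2 - a*x^3) / (a*x - 1) = 0"
    using px by (simp add: field_simps) (simp add: algebra_simps eval_nat_numeral)
  show "(1 - 3*a*x + 3*a^2*x^2 - a^3*x^3) * (1 - a*x) + real 4 * a * (x - 3/2*a*x^2 + a^2*x^3 - a^3*x^4/4) = 1"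
    by (simp add: algebra_simps eval_nat_numeral)
  show "- (4*a * (x^2 - a*x^3)^2 / (a*x - 1)) + (- 2*x - 6*a*x^2) * (x^2 - a*x^3) - (a*x - 1) * (x - 3/2*a*x^2 + (2 + a^2)*x^3 + (2*a - a^3/4)*x^4)
        = (1 - a*x) * (x - 3/2*a*x^2 + a^2*x^3 - a^3*x^4/4)"
    using px by (simp add: field_simps) (simp add: algebra_simps eval_nat_numeral)
qed (simp_all)

lemma sys2:
"iso_zero_urabe (\<lambda>(x, y).
      (- y + a*x*y + x^2 - a*x^3,
       x + 3*a*y^2 - 2*x*y - a*x^2 - 4*a*x^2*y + (a^2/3 + 2)*x^3 + a*x^4))"
proof -
  show ?thesis
    apply (rule family[where c=a and qc="3*a" and k=4 and n=3 and pa="\<lambda>x. x^2 - a*x^3" and qa="\<lambda>x. x - a*x^2 + (a^2/3 + 2)*x^3 + a*x^4" and qb="\<lambda>x. - 2*x - 4*a*x^2" and dpa="\<lambda>x. 2*x - 3*a*x^2" and Pr="\<lambda>x. x - a*x^2 + a^2*x^3/3" and Pr'="\<lambda>x. 1 - 2*a*x + a^2*x^2"])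
    subgoal by (simp add: algebra_simps)
    subgoal by simp
    subgoal by simp
    subgoal by (auto intro!: derivative_eq_intros simp: eval_nat_numeral algebra_simps)
    subgoal by (simp add: field_simps) (simp add: algebra_simps eval_nat_numeral power_Suc)
    subgoal by simp
    subgoal by simp
    subgoal by (auto intro!: derivative_eq_intros simp: eval_nat_numeral algebra_simps)
    subgoal by (simp add: algebra_simps eval_nat_numeral power_Suc)
    subgoal by (simp add: field_simps) (simp add: algebra_simps eval_nat_numeral power_Suc)
    subgoal by simp
    done
qed

lemma sys3:
  assumes b2: "\<beta>^2 = 3"
  shows "iso_zero_urabe (\<lambda>(x, y).
      (- y + 2*\<beta>*x*y + x^2 - 2*\<beta>*x^3,
       x + 8*\<beta>*y^2 - 2*x*y - 3*\<beta>*x^2 - 12*\<beta>*x^2*y + 14*x^3 - 2*\<beta>*x^4))"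
proof -
  have bb: "\<beta> * \<beta> = 3" using b2 by (simp add: power2_eq_square)
  have bbz: "\<beta> * (\<beta> * z) = 3 * z" for z :: real using bb by (simp add: mult.assoc[symmetric])
  show ?thesis
    apply (rule family[where c="2*\<beta>" and qc="8*\<beta>" and k=5 and n=4 and pa="\<lambda>x. x^2 - 2*\<beta>*x^3" and qa="\<lambda>x. x - 3*\<beta>*x^2 + 14*x^3 - 2*\<beta>*x^4" and qb="\<lambda>x. - 2*x - 12*\<beta>*x^2" and dpa="\<lambda>x. 2*x - 6*\<beta>*x^2" and Pr="\<lambda>x. x - 3*\<beta>*x^2 + 12*x^3 - 6*\<beta>*x^4" and Pr'="\<lambda>x. 1 - 6*\<beta>*x + 36*x^2 - 24*\<beta>*x^3"])
    subgoal by (simp add: algebra_simps)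
    subgoal by simp
    subgoal by simp
    subgoal by (auto intro!: derivative_eq_intros simp: eval_nat_numeral algebra_simps)
    subgoal by (simp add: field_simps) (simp add: algebra_simps eval_nat_numeral power_Suc bb bbz)
    subgoal by simp
    subgoal by simp
    subgoal by (auto intro!: derivative_eq_intros simp: eval_nat_numeral algebra_simps)
    subgoal by (simp add: algebra_simps eval_nat_numeral power_Suc bb bbz)
    subgoal by (simp add: field_simps) (simp add: algebra_simps eval_nat_numeral power_Suc bb bbz)
    subgoal by simp
    done
qed

lemma sys4:
  assumes b2: "\<alpha>^2 = 2"
  shows "iso_zero_urabe (\<lambda>(x, y).
      (- y + \<alpha>*x*y + x^2 - 4/3*\<alpha>*x^3 + 2/3*x^4,
       x + 6*\<alpha>*y^2 - 2*x*y - 5/2*\<alpha>*x^2 - 9*\<alpha>*x^2*y + 26/3*x^3 + 6*x^3*y - 8/3*\<alpha>*x^4))"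
proof -
  have bb: "\<alpha> * \<alpha> = 2" using b2 by (simp add: power2_eq_square)
  have bbz: "\<alpha> * (\<alpha> * z) = 2 * z" for z :: real using bb by (simp add: mult.assoc[symmetric])
  show ?thesis
    apply (rule family[where c="\<alpha>" and qc="6*\<alpha>" and k=7 and n=6 and pa="\<lambda>x. x^2 - 4/3*\<alpha>*x^3 + 2/3*x^4" and qa="\<lambda>x. x - 5/2*\<alpha>*x^2 + 26/3*x^3 - 8/3*\<alpha>*x^4" and qb="\<lambda>x. - 2*x - 9*\<alpha>*x^2 + 6*x^3" and dpa="\<lambda>x. 2*x - 4*\<alpha>*x^2 + 8/3*x^3" and Pr="\<lambda>x. x - 5/2*\<alpha>*x^2 + 20/3*x^3 - 5*\<alpha>*x^4 + 4*x^5 - 2/3*\<alpha>*x^6" and Pr'="\<lambda>x. 1 - 5*\<alpha>*x + 20*x^2 - 20*\<alpha>*x^3 + 20*x^4 - 4*\<alpha>*x^5"])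
    subgoal by (simp add: algebra_simps)
    subgoal by simp
    subgoal by simp
    subgoal by (auto intro!: derivative_eq_intros simp: eval_nat_numeral algebra_simps)
    subgoal by (simp add: field_simps) (simp add: algebra_simps eval_nat_numeral power_Suc bb bbz)
    subgoal by simp
    subgoal by simp
    subgoal by (auto intro!: derivative_eq_intros simp: eval_nat_numeral algebra_simps)
    subgoal by (simp add: algebra_simps eval_nat_numeral power_Suc bb bbz)
    subgoal by (simp add: field_simps) (simp add: algebra_simps eval_nat_numeral power_Suc bb bbz)
    subgoal by simp
    done
qed

lemma sys5:
  assumes b2: "\<alpha>^2 = 2"
  shows "iso_zero_urabe (\<lambda>(x, y).
      (- y + \<alpha>*x*y + x^2 - 4/3*\<alpha>*x^3 + 2/3*x^4,
       x + 3*\<alpha>*y^2 - 2*x*y - \<alpha>*x^2 - 3*\<alpha>*x^2*y + 8/3*x^3 + 2*x^3*y - 2/3*\<alpha>*x^4))"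
proof -
  have bb: "\<alpha> * \<alpha> = 2" using b2 by (simp add: power2_eq_square)
  have bbz: "\<alpha> * (\<alpha> * z) = 2 * z" for z :: real using bb by (simp add: mult.assoc[symmetric])
  show ?thesis
    apply (rule family[where c="\<alpha>" and qc="3*\<alpha>" and k=4 and n=3 and pa="\<lambda>x. x^2 - 4/3*\<alpha>*x^3 + 2/3*x^4" and qa="\<lambda>x. x - \<alpha>*x^2 + 8/3*x^3 - 2/3*\<alpha>*x^4" and qb="\<lambda>x. - 2*x - 3*\<alpha>*x^2 + 2*x^3" and dpa="\<lambda>x. 2*x - 4*\<alpha>*x^2 + 8/3*x^3" and Pr="\<lambda>x. x - \<alpha>*x^2 + 2/3*x^3" and Pr'="\<lambda>x. 1 - 2*\<alpha>*x + 2*x^2"])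
    subgoal by (simp add: algebra_simps)
    subgoal by simp
    subgoal by simp
    subgoal by (auto intro!: derivative_eq_intros simp: eval_nat_numeral algebra_simps)
    subgoal by (simp add: field_simps) (simp add: algebra_simps eval_nat_numeral power_Suc bb bbz)
    subgoal by simp
    subgoal by simp
    subgoal by (auto intro!: derivative_eq_intros simp: eval_nat_numeral algebra_simps)
    subgoal by (simp add: algebra_simps eval_nat_numeral power_Suc bb bbz)
    subgoal by (simp add: field_simps) (simp add: algebra_simps eval_nat_numeral power_Suc bb bbz)
    subgoal by simp
    done
qed

theorem theorem4p2:
  shows
  "(\<forall>a::real. iso_zero_urabe (\<lambda>(x, y).
      (- y + a*x*y + x^2 - a*x^3,
       x + 4*a*y^2 - 2*x*y - 3/2*a*x^2 - 6*a*x^2*y + (2 + a^2)*x^3 + (2*a - a^3/4)*x^4)))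
 \<and> (\<forall>a::real. iso_zero_urabe (\<lambda>(x, y).
      (- y + a*x*y + x^2 - a*x^3,
       x + 3*a*y^2 - 2*x*y - a*x^2 - 4*a*x^2*y + (a^2/3 + 2)*x^3 + a*x^4)))
 \<and> (\<forall>\<beta>::real. \<beta> = sqrt 3 \<or> \<beta> = - sqrt 3 \<longrightarrow> iso_zero_urabe (\<lambda>(x, y).
      (- y + 2*\<beta>*x*y + x^2 - 2*\<beta>*x^3,
       x + 8*\<beta>*y^2 - 2*x*y - 3*\<beta>*x^2 - 12*\<beta>*x^2*y + 14*x^3 - 2*\<beta>*x^4)))
 \<and> (\<forall>\<alpha>::real. \<alpha> = sqrt 2 \<or> \<alpha> = - sqrt 2 \<longrightarrow> iso_zero_urabe (\<lambda>(x, y).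
      (- y + \<alpha>*x*y + x^2 - 4/3*\<alpha>*x^3 + 2/3*x^4,
       x + 6*\<alpha>*y^2 - 2*x*y - 5/2*\<alpha>*x^2 - 9*\<alpha>*x^2*y + 26/3*x^3 + 6*x^3*y - 8/3*\<alpha>*x^4)))
 \<and> (\<forall>\<alpha>::real. \<alpha> = sqrt 2 \<or> \<alpha> = - sqrt 2 \<longrightarrow> iso_zero_urabe (\<lambda>(x, y).
      (- y + \<alpha>*x*y + x^2 - 4/3*\<alpha>*x^3 + 2/3*x^4,
       x + 3*\<alpha>*y^2 - 2*x*y - \<alpha>*x^2 - 3*\<alpha>*x^2*y + 8/3*x^3 + 2*x^3*y - 2/3*\<alpha>*x^4)))"
proof (intro conjI allI impI)
  fix a :: real
  show "iso_zero_urabe (\<lambda>(x, y).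
      (- y + a*x*y + x^2 - a*x^3,
       x + 4*a*y^2 - 2*x*y - 3/2*a*x^2 - 6*a*x^2*y + (2 + a^2)*x^3 + (2*a - a^3/4)*x^4))"
    by (rule sys1)
next
  fix a :: real
  show "iso_zero_urabe (\<lambda>(x, y).
      (- y + a*x*y + x^2 - a*x^3,
       x + 3*a*y^2 - 2*x*y - a*x^2 - 4*a*x^2*y + (a^2/3 + 2)*x^3 + a*x^4))"
    by (rule sys2)
next
  fix \<beta> :: real assume h: "\<beta> = sqrt 3 \<or> \<beta> = - sqrt 3"
  then have "\<beta>^2 = 3" by auto
  then show "iso_zero_urabe (\<lambda>(x, y).
      (- y + 2*\<beta>*x*y + x^2 - 2*\<beta>*x^3,
       x + 8*\<beta>*y^2 - 2*x*y - 3*\<beta>*x^2 - 12*\<beta>*x^2*y + 14*x^3 - 2*\<beta>*x^4))"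
    by (rule sys3)
next
  fix \<alpha> :: real assume h: "\<alpha> = sqrt 2 \<or> \<alpha> = - sqrt 2"
  then have "\<alpha>^2 = 2" by auto
  then show "iso_zero_urabe (\<lambda>(x, y).
      (- y + \<alpha>*x*y + x^2 - 4/3*\<alpha>*x^3 + 2/3*x^4,
       x + 6*\<alpha>*y^2 - 2*x*y - 5/2*\<alpha>*x^2 - 9*\<alpha>*x^2*y + 26/3*x^3 + 6*x^3*y - 8/3*\<alpha>*x^4))"
    by (rule sys4)
next
  fix \<alpha> :: real assume h: "\<alpha> = sqrt 2 \<or> \<alpha> = - sqrt 2"
  then have "\<alpha>^2 = 2" by auto
  then show "iso_zero_urabe (\<lambda>(x, y).
      (- y + \<alpha>*x*y + x^2 - 4/3*\<alpha>*x^3 + 2/3*x^4,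
       x + 3*\<alpha>*y^2 - 2*x*y - \<alpha>*x^2 - 3*\<alpha>*x^2*y + 8/3*x^3 + 2*x^3*y - 2/3*\<alpha>*x^4))"
    by (rule sys5)
qed

end
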